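(* Let $G$ be a finite group, $D$ a Dedekind domain, $A$ a $DG$-module and $B$ a $DG$-submodule of $A$ such that: (i) $B=\bigoplus_{\lambda\in\Lambda}B_\lambda$ with each $B_\lambda$ a simple $DG$-submodule; (ii) $A/B$ is a simple $DG$-module and $A/B\not\cong_{DG}B_\lambda$ for all $\lambda\in\Lambda$; (iii) $\mathrm{Ann}_D(B)=\mathrm{Ann}_D(A/B)=P$ is a maximal ideal of $D$; (iv) $\mathrm{char}(D/P)=0$. Then there exists a $DG$-submodule $K$ of $A$ with $A=B\oplus K$. *)

theory Defs
  imports "HOL-Algebra.Algebra"
begin

text \<open>Integral closedness
is written out without the fraction field: if the fraction a/b (b nonzero) is a
root of a monic polynomial with coefficients in D, then b divides a.\<close>
definition dedekind_domain :: "('d, 'e) ring_scheme \<Rightarrow> bool" where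
  "dedekind_domain D \<longleftrightarrow>
     domain D \<and> noetherian_ring D \<and>
     (\<forall>P. primeideal P D \<and> P \<noteq> {\<zero>\<^bsub>D\<^esub>} \<longrightarrow> maximalideal P D) \<and>
     (\<forall>a \<in> carrier D. \<forall>b \<in> carrier D. \<forall>n::nat. \<forall>c.
        b \<noteq> \<zero>\<^bsub>D\<^esub> \<and> n > 0 \<and> c \<in> {..<n} \<rightarrow> carrier D \<and>
        a [^]\<^bsub>D\<^esub> n \<oplus>\<^bsub>D\<^esub>
          (\<Oplus>\<^bsub>D\<^esub>i\<in>{..<n}. c i \<otimes>\<^bsub>D\<^esub> a [^]\<^bsub>D\<^esub> i \<otimes>\<^bsub>D\<^esub> b [^]\<^bsub>D\<^esub> (n - i))
          = \<zero>\<^bsub>D\<^esub>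
        \<longrightarrow> (\<exists>d \<in> carrier D. a = b \<otimes>\<^bsub>D\<^esub> d))"

definition char_zero_ring :: "('a, 'b) ring_scheme \<Rightarrow> bool" where
  "char_zero_ring R \<longleftrightarrow> (\<forall>n::nat. n > 0 \<longrightarrow> [n] \<cdot>\<^bsub>R\<^esub> \<one>\<^bsub>R\<^esub> \<noteq> \<zero>\<^bsub>R\<^esub>)"

text \<open>A DG-module: a D-module M together with a G-action \<phi> on carrier M by
D-linear maps (equivalently, a module over the group ring DG).\<close>
definition DG_module ::
  "('d, 'e) ring_scheme \<Rightarrow> ('g, 'h) monoid_scheme \<Rightarrow> ('d, 'm) module \<Rightarrow> ('g \<Rightarrow> 'm \<Rightarrow> 'm) \<Rightarrow> bool" where
  "DG_module D G M \<phi> \<longleftrightarrow>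
     module D M \<and> group G \<and> group_action G (carrier M) \<phi> \<and>
     (\<forall>g \<in> carrier G. \<forall>x \<in> carrier M. \<forall>y \<in> carrier M.
        \<phi> g (x \<oplus>\<^bsub>M\<^esub> y) = \<phi> g x \<oplus>\<^bsub>M\<^esub> \<phi> g y) \<and>
     (\<forall>g \<in> carrier G. \<forall>a \<in> carrier D. \<forall>x \<in> carrier M.
        \<phi> g (a \<odot>\<^bsub>M\<^esub> x) = a \<odot>\<^bsub>M\<^esub> \<phi> g x)"

definition DG_submodule ::
  "('d, 'e) ring_scheme \<Rightarrow> ('g, 'h) monoid_scheme \<Rightarrow> ('d, 'm) module \<Rightarrow> ('g \<Rightarrow> 'm \<Rightarrow> 'm) \<Rightarrow> 'm set \<Rightarrow> bool" where
  "DG_submodule D G M \<phi> N \<longleftrightarrow>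
     submodule N D M \<and> (\<forall>g \<in> carrier G. \<forall>x \<in> N. \<phi> g x \<in> N)"

definition simple_DG_submodule ::
  "('d, 'e) ring_scheme \<Rightarrow> ('g, 'h) monoid_scheme \<Rightarrow> ('d, 'm) module \<Rightarrow> ('g \<Rightarrow> 'm \<Rightarrow> 'm) \<Rightarrow> 'm set \<Rightarrow> bool" where
  "simple_DG_submodule D G M \<phi> S \<longleftrightarrow>
     DG_submodule D G M \<phi> S \<and> S \<noteq> {\<zero>\<^bsub>M\<^esub>} \<and>
     (\<forall>N. DG_submodule D G M \<phi> N \<and> N \<subseteq> S \<longrightarrow> N = {\<zero>\<^bsub>M\<^esub>} \<or> N = S)"

text \<open>The quotient (carrier M)/B is a simple DG-module: B is proper and the only
DG-submodules between B and carrier M are B and carrier M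
(correspondence theorem).\<close>
definition simple_DG_quotient ::
  "('d, 'e) ring_scheme \<Rightarrow> ('g, 'h) monoid_scheme \<Rightarrow> ('d, 'm) module \<Rightarrow> ('g \<Rightarrow> 'm \<Rightarrow> 'm) \<Rightarrow> 'm set \<Rightarrow> bool" where
  "simple_DG_quotient D G M \<phi> B \<longleftrightarrow>
     B \<noteq> carrier M \<and>
     (\<forall>N. DG_submodule D G M \<phi> N \<and> B \<subseteq> N \<and> N \<subseteq> carrier M \<longrightarrow> N = B \<or> N = carrier M)"

text \<open>(carrier M)/B is DG-isomorphic to the DG-submodule S: there is a surjective
DG-homomorphism carrier M \<rightarrow> S with kernel B (first isomorphism theorem).\<close>
definition quotient_DG_iso ::
  "('d, 'e) ring_scheme \<Rightarrow> ('g, 'h) monoid_scheme \<Rightarrow> ('d, 'm) module \<Rightarrow> ('g \<Rightarrow> 'm \<Rightarrow> 'm) \<Rightarrow> 'm set \<Rightarrow> 'm set \<Rightarrow> bool" where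
  "quotient_DG_iso D G M \<phi> B S \<longleftrightarrow>
     (\<exists>f. f ` carrier M = S \<and>
        (\<forall>x \<in> carrier M. \<forall>y \<in> carrier M. f (x \<oplus>\<^bsub>M\<^esub> y) = f x \<oplus>\<^bsub>M\<^esub> f y) \<and>
        (\<forall>a \<in> carrier D. \<forall>x \<in> carrier M. f (a \<odot>\<^bsub>M\<^esub> x) = a \<odot>\<^bsub>M\<^esub> f x) \<and>
        (\<forall>g \<in> carrier G. \<forall>x \<in> carrier M. f (\<phi> g x) = \<phi> g (f x)) \<and>
        {x \<in> carrier M. f x = \<zero>\<^bsub>M\<^esub>} = B)"

definition ann :: "('d, 'e) ring_scheme \<Rightarrow> ('d, 'm) module \<Rightarrow> 'm set \<Rightarrow> 'd set" where
  "ann D M N = {a \<in> carrier D. \<forall>x \<in> N. a \<odot>\<^bsub>M\<^esub> x = \<zero>\<^bsub>M\<^esub>}"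

definition ann_quot :: "('d, 'e) ring_scheme \<Rightarrow> ('d, 'm) module \<Rightarrow> 'm set \<Rightarrow> 'd set" where
  "ann_quot D M B = {a \<in> carrier D. \<forall>x \<in> carrier M. a \<odot>\<^bsub>M\<^esub> x \<in> B}"

definition internal_direct_sum :: "('d, 'm) module \<Rightarrow> 'l set \<Rightarrow> ('l \<Rightarrow> 'm set) \<Rightarrow> 'm set \<Rightarrow> bool" where
  "internal_direct_sum M L Bf B \<longleftrightarrow>
     B = {finsum M x S | x S. finite S \<and> S \<subseteq> L \<and> (\<forall>l \<in> S. x l \<in> Bf l)} \<and>
     (\<forall>S x. finite S \<and> S \<subseteq> L \<and> (\<forall>l \<in> S. x l \<in> Bf l) \<and> finsum M x S = \<zero>\<^bsub>M\<^esub>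
        \<longrightarrow> (\<forall>l \<in> S. x l = \<zero>\<^bsub>M\<^esub>))"

end

theory Submission
  imports Defs
begin

locale L7 =
  fixes D :: "('d, 'e) ring_scheme" and G :: "('g, 'h) monoid_scheme"
    and M :: "('d, 'm) module" and \<phi> :: "'g \<Rightarrow> 'm \<Rightarrow> 'm"
    and B :: "'m set" and L :: "'l set" and Bf :: "'l \<Rightarrow> 'm set" and P :: "'d set"
  assumes finG: "finite (carrier G)"
    and ded: "dedekind_domain D"
    and DGm: "DG_module D G M \<phi>"
    and DGB: "DG_submodule D G M \<phi> B"
    and ids: "internal_direct_sum M L Bf B"
    and simpl: "\<forall>l \<in> L. simple_DG_submodule D G M \<phi> (Bf l)"
    and sq: "simple_DG_quotient D G M \<phi> B"
    and niso: "\<forall>l \<in> L. \<not> quotient_DG_iso D G M \<phi> B (Bf l)"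
    and annB: "ann D M B = P" and annQ: "ann_quot D M B = P"
    and maxP: "maximalideal P D"
    and charz: "char_zero_ring (D Quot P)"

sublocale L7 \<subseteq> module D M
  using DGm unfolding DG_module_def by auto

sublocale L7 \<subseteq> Gp: group G
  using DGm unfolding DG_module_def by auto

sublocale L7 \<subseteq> GA: group_action G "carrier M" \<phi>
  using DGm unfolding DG_module_def by auto

context L7
begin

lemma act_add: "g \<in> carrier G \<Longrightarrow> x \<in> carrier M \<Longrightarrow> y \<in> carrier M \<Longrightarrow>
  \<phi> g (x \<oplus>\<^bsub>M\<^esub> y) = \<phi> g x \<oplus>\<^bsub>M\<^esub> \<phi> g y"
  using DGm unfolding DG_module_def by auto

lemma act_smult: "g \<in> carrier G \<Longrightarrow> a \<in> carrier D \<Longrightarrow> x \<in> carrier M \<Longrightarrow>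
  \<phi> g (a \<odot>\<^bsub>M\<^esub> x) = a \<odot>\<^bsub>M\<^esub> \<phi> g x"
  using DGm unfolding DG_module_def by auto

lemma act_closed[simp]: "g \<in> carrier G \<Longrightarrow> x \<in> carrier M \<Longrightarrow> \<phi> g x \<in> carrier M"
  using GA.element_image by blast

lemma act_zero[simp]: "g \<in> carrier G \<Longrightarrow> \<phi> g \<zero>\<^bsub>M\<^esub> = \<zero>\<^bsub>M\<^esub>"
  using act_smult[of g "\<zero>\<^bsub>D\<^esub>" "\<zero>\<^bsub>M\<^esub>"] by simp

lemma act_neg: "g \<in> carrier G \<Longrightarrow> x \<in> carrier M \<Longrightarrow> \<phi> g (\<ominus>\<^bsub>M\<^esub> x) = \<ominus>\<^bsub>M\<^esub> \<phi> g x"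
  using act_smult[of g "\<ominus>\<^bsub>D\<^esub> \<one>\<^bsub>D\<^esub>" x] by (simp add: smult_l_minus)

lemma act_one[simp]: "x \<in> carrier M \<Longrightarrow> \<phi> \<one>\<^bsub>G\<^esub> x = x"
  using GA.id_eq_one by (metis restrict_apply')

lemma act_mult: "g \<in> carrier G \<Longrightarrow> h \<in> carrier G \<Longrightarrow> x \<in> carrier M \<Longrightarrow>
  \<phi> (g \<otimes>\<^bsub>G\<^esub> h) x = \<phi> g (\<phi> h x)"
  using GA.composition_rule by blast

lemma act_inv[simp]: "g \<in> carrier G \<Longrightarrow> x \<in> carrier M \<Longrightarrow> \<phi> (inv\<^bsub>G\<^esub> g) (\<phi> g x) = x"
  by (metis Gp.inv_closed Gp.l_inv act_mult act_one)

lemma act_inv'[simp]: "g \<in> carrier G \<Longrightarrow> x \<in> carrier M \<Longrightarrow> \<phi> g (\<phi> (inv\<^bsub>G\<^esub> g) x) = x"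
  by (metis Gp.inv_closed Gp.r_inv act_mult act_one)

lemma act_finsum: "finite S \<Longrightarrow> f \<in> S \<rightarrow> carrier M \<Longrightarrow> g \<in> carrier G \<Longrightarrow>
   \<phi> g (finsum M f S) = finsum M (\<lambda>i. \<phi> g (f i)) S"
proof (induct S rule: finite_induct)
  case empty then show ?case by simp
next
  case (insert x F)
  then show ?case by (simp add: act_add finsum_closed Pi_def)
qed

lemma sub_props:
  assumes "submodule H D M"
  shows "H \<subseteq> carrier M" "\<zero>\<^bsub>M\<^esub> \<in> H"
    "\<And>a. a \<in> H \<Longrightarrow> \<ominus>\<^bsub>M\<^esub> a \<in> H"
    "\<And>a b. \<lbrakk>a \<in> carrier D; b \<in> H\<rbrakk> \<Longrightarrow> a \<odot>\<^bsub>M\<^esub> b \<in> H"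
    "\<And> a b. \<lbrakk>a \<in> H ; b \<in> H\<rbrakk> \<Longrightarrow> a \<oplus>\<^bsub>M\<^esub> b \<in> H"
proof -
  note E = submoduleE[OF assms]
  show "H \<subseteq> carrier M" by (rule E)
  obtain x where "x \<in> H" using E(2) by blast
  then have "\<zero>\<^bsub>D\<^esub> \<odot>\<^bsub>M\<^esub> x \<in> H" using E by blast
  then show "\<zero>\<^bsub>M\<^esub> \<in> H" using \<open>x \<in> H\<close> E(1) by auto
qed (use submoduleE[OF assms] in auto)

lemma sub_finsum:
  assumes "submodule H D M" "finite S" "f \<in> S \<rightarrow> H"
  shows "finsum M f S \<in> H"
  using assms(2,3)
proof (induct S rule: finite_induct)
  case empty then show ?case using sub_props[OF assms(1)] by simp
next
  case (insert x F)
  have sub: "H \<subseteq> carrier M" using sub_props[OF assms(1)] by simp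
  then have "f \<in> F \<rightarrow> carrier M" "f x \<in> carrier M" using insert by auto
  then show ?case using insert sub_props[OF assms(1)] by (simp add: finsum_insert)
qed

lemma finsum_neg: "finite S \<Longrightarrow> f \<in> S \<rightarrow> carrier M \<Longrightarrow>
   finsum M (\<lambda>i. \<ominus>\<^bsub>M\<^esub> f i) S = \<ominus>\<^bsub>M\<^esub> finsum M f S"
proof -
  assume a: "finite S" "f \<in> S \<rightarrow> carrier M"
  have "finsum M (\<lambda>i. \<ominus>\<^bsub>M\<^esub> f i) S = finsum M (\<lambda>i. (\<ominus>\<^bsub>D\<^esub> \<one>\<^bsub>D\<^esub>) \<odot>\<^bsub>M\<^esub> f i) S"
  proof (intro finsum_cong')
    fix i assume "i \<in> S"
    then have "f i \<in> carrier M" using a by auto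
    then show "\<ominus>\<^bsub>M\<^esub> f i = (\<ominus>\<^bsub>D\<^esub> \<one>\<^bsub>D\<^esub>) \<odot>\<^bsub>M\<^esub> f i"
      using smult_l_minus[of "\<one>\<^bsub>D\<^esub>" "f i"] by simp
  qed (use a in auto)
  also have "\<dots> = (\<ominus>\<^bsub>D\<^esub> \<one>\<^bsub>D\<^esub>) \<odot>\<^bsub>M\<^esub> finsum M f S"
    using a by (simp add: finsum_smult_ldistr)
  also have "\<dots> = \<ominus>\<^bsub>M\<^esub> finsum M f S"
    using a by (simp add: smult_l_minus finsum_closed)
  finally show ?thesis .
qed

definition "is_hom h \<longleftrightarrow> (\<forall>x\<in>carrier M. h x \<in> carrier M) \<and>
   (\<forall>x\<in>carrier M. \<forall>y\<in>carrier M. h (x \<oplus>\<^bsub>M\<^esub> y) = h x \<oplus>\<^bsub>M\<^esub> h y) \<and>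
   (\<forall>a\<in>carrier D. \<forall>x\<in>carrier M. h (a \<odot>\<^bsub>M\<^esub> x) = a \<odot>\<^bsub>M\<^esub> h x) \<and>
   (\<forall>g\<in>carrier G. \<forall>x\<in>carrier M. h (\<phi> g x) = \<phi> g (h x))"

lemma hom_zero: assumes "is_hom h" shows "h \<zero>\<^bsub>M\<^esub> = \<zero>\<^bsub>M\<^esub>"
proof -
  have "h \<zero>\<^bsub>M\<^esub> = h (\<zero>\<^bsub>D\<^esub> \<odot>\<^bsub>M\<^esub> \<zero>\<^bsub>M\<^esub>)" by simp
  also have "\<dots> = \<zero>\<^bsub>D\<^esub> \<odot>\<^bsub>M\<^esub> h \<zero>\<^bsub>M\<^esub>"
    using assms unfolding is_hom_def by (meson M.zero_closed R.zero_closed)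
  also have "\<dots> = \<zero>\<^bsub>M\<^esub>"
    using assms unfolding is_hom_def by (meson M.zero_closed smult_l_null)
  finally show ?thesis .
qed

lemma hom_neg: assumes "is_hom h" "x \<in> carrier M" shows "h (\<ominus>\<^bsub>M\<^esub> x) = \<ominus>\<^bsub>M\<^esub> h x"
proof -
  have hx: "h x \<in> carrier M" using assms unfolding is_hom_def by blast
  have "h (\<ominus>\<^bsub>M\<^esub> x) = h ((\<ominus>\<^bsub>D\<^esub> \<one>\<^bsub>D\<^esub>) \<odot>\<^bsub>M\<^esub> x)"
    using assms(2) smult_l_minus[of "\<one>\<^bsub>D\<^esub>" x] by simp
  also have "\<dots> = (\<ominus>\<^bsub>D\<^esub> \<one>\<^bsub>D\<^esub>) \<odot>\<^bsub>M\<^esub> h x"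
    using assms unfolding is_hom_def by (meson R.add.inv_closed R.one_closed)
  also have "\<dots> = \<ominus>\<^bsub>M\<^esub> h x"
    using hx smult_l_minus[of "\<one>\<^bsub>D\<^esub>" "h x"] by simp
  finally show ?thesis .
qed

lemma hom_closed: "is_hom h \<Longrightarrow> x \<in> carrier M \<Longrightarrow> h x \<in> carrier M"
  unfolding is_hom_def by blast
lemma hom_add: "is_hom h \<Longrightarrow> x \<in> carrier M \<Longrightarrow> y \<in> carrier M \<Longrightarrow> h (x \<oplus>\<^bsub>M\<^esub> y) = h x \<oplus>\<^bsub>M\<^esub> h y"
  unfolding is_hom_def by blast
lemma hom_smult: "is_hom h \<Longrightarrow> a \<in> carrier D \<Longrightarrow> x \<in> carrier M \<Longrightarrow> h (a \<odot>\<^bsub>M\<^esub> x) = a \<odot>\<^bsub>M\<^esub> h x"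
  unfolding is_hom_def by blast
lemma hom_act: "is_hom h \<Longrightarrow> g \<in> carrier G \<Longrightarrow> x \<in> carrier M \<Longrightarrow> h (\<phi> g x) = \<phi> g (h x)"
  unfolding is_hom_def by blast

lemma hom_kernel: assumes "is_hom h"
  shows "DG_submodule D G M \<phi> {x \<in> carrier M. h x = \<zero>\<^bsub>M\<^esub>}"
  unfolding DG_submodule_def
proof (intro conjI ballI)
  show "submodule {x \<in> carrier M. h x = \<zero>\<^bsub>M\<^esub>} D M"
  proof (rule submoduleI)
    show "\<zero>\<^bsub>M\<^esub> \<in> {x \<in> carrier M. h x = \<zero>\<^bsub>M\<^esub>}" using hom_zero[OF assms] by simp
    show "\<ominus>\<^bsub>M\<^esub> a \<in> {x \<in> carrier M. h x = \<zero>\<^bsub>M\<^esub>}" if "a \<in> {x \<in> carrier M. h x = \<zero>\<^bsub>M\<^esub>}" for a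
      using that hom_neg[OF assms, of a] by simp
    show "a \<oplus>\<^bsub>M\<^esub> b \<in> {x \<in> carrier M. h x = \<zero>\<^bsub>M\<^esub>}" if "a \<in> {x \<in> carrier M. h x = \<zero>\<^bsub>M\<^esub>}" "b \<in> {x \<in> carrier M. h x = \<zero>\<^bsub>M\<^esub>}" for a b
      using that hom_add[OF assms, of a b] by simp
    show "a \<odot>\<^bsub>M\<^esub> b \<in> {x \<in> carrier M. h x = \<zero>\<^bsub>M\<^esub>}" if "a \<in> carrier D" "b \<in> {x \<in> carrier M. h x = \<zero>\<^bsub>M\<^esub>}" for a b
      using that hom_smult[OF assms, of a b] by simp
  qed auto
  fix g x assume "g \<in> carrier G" "x \<in> {x \<in> carrier M. h x = \<zero>\<^bsub>M\<^esub>}"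
  then show "\<phi> g x \<in> {x \<in> carrier M. h x = \<zero>\<^bsub>M\<^esub>}"
    using hom_act[OF assms, of g x] by simp
qed

lemma hom_image: assumes "is_hom h"
  shows "DG_submodule D G M \<phi> (h ` carrier M)"
  unfolding DG_submodule_def
proof (intro conjI ballI)
  show "submodule (h ` carrier M) D M"
  proof (rule submoduleI)
    show "h ` carrier M \<subseteq> carrier M" using hom_closed[OF assms] by auto
    have "h \<zero>\<^bsub>M\<^esub> \<in> h ` carrier M" by (rule imageI) simp
    then show "\<zero>\<^bsub>M\<^esub> \<in> h ` carrier M" using hom_zero[OF assms] by simp
    show "\<ominus>\<^bsub>M\<^esub> a \<in> h ` carrier M" if ha: "a \<in> h ` carrier M" for a
    proof -
      obtain x where x2: "a = h x" and x1: "x \<in> carrier M" using ha by (rule imageE)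
      note x = x1 x2
      have e: "\<ominus>\<^bsub>M\<^esub> a = h (\<ominus>\<^bsub>M\<^esub> x)" using hom_neg[OF assms x(1)] x(2) by simp
      have "\<ominus>\<^bsub>M\<^esub> x \<in> carrier M" using x(1) by simp
      then show ?thesis unfolding e by blast
    qed
    show "a \<oplus>\<^bsub>M\<^esub> b \<in> h ` carrier M" if ha: "a \<in> h ` carrier M" and hb: "b \<in> h ` carrier M" for a b
    proof -
      obtain x where x2: "a = h x" and x1: "x \<in> carrier M" using ha by (rule imageE)
      note x = x1 x2
      obtain y where y2: "b = h y" and y1: "y \<in> carrier M" using hb by (rule imageE)
      note y = y1 y2
      have e: "a \<oplus>\<^bsub>M\<^esub> b = h (x \<oplus>\<^bsub>M\<^esub> y)" using hom_add[OF assms x(1) y(1)] x(2) y(2) by simp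
      have "x \<oplus>\<^bsub>M\<^esub> y \<in> carrier M" using x(1) y(1) by simp
      then show ?thesis unfolding e by blast
    qed
    show "a \<odot>\<^bsub>M\<^esub> b \<in> h ` carrier M" if ha: "a \<in> carrier D" and hb: "b \<in> h ` carrier M" for a b
    proof -
      obtain y where y2: "b = h y" and y1: "y \<in> carrier M" using hb by (rule imageE)
      note y = y1 y2
      have e: "a \<odot>\<^bsub>M\<^esub> b = h (a \<odot>\<^bsub>M\<^esub> y)" using hom_smult[OF assms ha y(1)] y(2) by simp
      have "a \<odot>\<^bsub>M\<^esub> y \<in> carrier M" using ha y(1) by simp
      then show ?thesis unfolding e by blast
    qed
  qed
  fix g x assume gx: "g \<in> carrier G" "x \<in> h ` carrier M"
  then obtain y where y: "y \<in> carrier M" "x = h y" by blast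
  have e: "\<phi> g x = h (\<phi> g y)" using hom_act[OF assms gx(1) y(1)] y(2) by simp
  have "\<phi> g y \<in> carrier M" using gx(1) y(1) by simp
  then show "\<phi> g x \<in> h ` carrier M" unfolding e by blast
qed


lemma Bf_sub: "l \<in> L \<Longrightarrow> submodule (Bf l) D M"
  using simpl unfolding simple_DG_submodule_def DG_submodule_def by blast

lemma Bf_act: "l \<in> L \<Longrightarrow> g \<in> carrier G \<Longrightarrow> x \<in> Bf l \<Longrightarrow> \<phi> g x \<in> Bf l"
  using simpl unfolding simple_DG_submodule_def DG_submodule_def by blast

lemma Bf_carrier: "l \<in> L \<Longrightarrow> x \<in> Bf l \<Longrightarrow> x \<in> carrier M"
  using sub_props(1)[OF Bf_sub] by blast

lemma B_sub: "submodule B D M"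
  using DGB unfolding DG_submodule_def by blast

lemma B_act: "g \<in> carrier G \<Longrightarrow> x \<in> B \<Longrightarrow> \<phi> g x \<in> B"
  using DGB unfolding DG_submodule_def by blast

lemma B_carrier: "x \<in> B \<Longrightarrow> x \<in> carrier M"
  using sub_props(1)[OF B_sub] by blast

definition "dec T x b \<longleftrightarrow> finite T \<and> T \<subseteq> L \<and> (\<forall>k\<in>T. x k \<in> Bf k) \<and> b = finsum M x T"
definition "coord l x T = (if l \<in> T then x l else \<zero>\<^bsub>M\<^esub>)"
definition "proj l b = (THE y. \<exists>T x. dec T x b \<and> y = coord l x T)"

lemma dec_carrier: "dec T x b \<Longrightarrow> x \<in> T \<rightarrow> carrier M"
  unfolding dec_def using Bf_carrier by blast

lemma dec_exists: "b \<in> B \<Longrightarrow> \<exists>T x. dec T x b"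
  using ids unfolding internal_direct_sum_def dec_def by blast

lemma dec_B: "dec T x b \<Longrightarrow> b \<in> B"
  using ids unfolding internal_direct_sum_def dec_def by blast

lemma indep: "finite S \<Longrightarrow> S \<subseteq> L \<Longrightarrow> (\<forall>l \<in> S. x l \<in> Bf l) \<Longrightarrow> finsum M x S = \<zero>\<^bsub>M\<^esub>
   \<Longrightarrow> l \<in> S \<Longrightarrow> x l = \<zero>\<^bsub>M\<^esub>"
  using ids unfolding internal_direct_sum_def by blast

lemma coord_in: "l \<in> L \<Longrightarrow> dec T x b \<Longrightarrow> coord l x T \<in> Bf l"
  unfolding coord_def dec_def using sub_props(2)[OF Bf_sub] by auto

lemma dec_extend:
  assumes d: "dec T x b" and U: "T \<subseteq> U" "finite U" "U \<subseteq> L"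
  shows "dec U (\<lambda>k. coord k x T) b"
proof -
  have xc: "x \<in> T \<rightarrow> carrier M" using dec_carrier[OF d] .
  have "finsum M (\<lambda>k. coord k x T) U = finsum M x T"
    apply (rule M.add.finprod_mono_neutral_cong_right)
    using U xc unfolding coord_def by auto
  moreover have "\<forall>k\<in>U. coord k x T \<in> Bf k"
    using coord_in d U by blast
  ultimately show ?thesis using d U unfolding dec_def by auto
qed

lemma coord_extend: "T \<subseteq> U \<Longrightarrow> coord l (\<lambda>k. coord k x T) U = coord l x T"
  unfolding coord_def by auto

lemma dec_unique:
  assumes d: "dec T x b" and d': "dec T' x' b"
  shows "coord l x T = coord l x' T'"
proof -
  define U where "U = T \<union> T'"
  have U: "finite U" "U \<subseteq> L" using d d' unfolding U_def dec_def by auto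
  define ex where "ex = (\<lambda>k. coord k x T)"
  define ex' where "ex' = (\<lambda>k. coord k x' T')"
  have e: "dec U ex b" unfolding ex_def by (rule dec_extend[OF d _ U]) (auto simp: U_def)
  have e': "dec U ex' b" unfolding ex'_def by (rule dec_extend[OF d' _ U]) (auto simp: U_def)
  have c: "ex \<in> U \<rightarrow> carrier M" "ex' \<in> U \<rightarrow> carrier M"
    using dec_carrier[OF e] dec_carrier[OF e'] by auto
  have bc: "b \<in> carrier M" using dec_B[OF d] B_carrier by blast
  define z where "z = (\<lambda>k. ex k \<oplus>\<^bsub>M\<^esub> \<ominus>\<^bsub>M\<^esub> ex' k)"
  have zin: "\<forall>k\<in>U. z k \<in> Bf k"
  proof
    fix k assume k: "k \<in> U"
    then have "k \<in> L" "ex k \<in> Bf k" "ex' k \<in> Bf k" using U e e' unfolding dec_def by auto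
    then show "z k \<in> Bf k" unfolding z_def using sub_props[OF Bf_sub[OF \<open>k \<in> L\<close>]] by blast
  qed
  have "finsum M z U = finsum M ex U \<oplus>\<^bsub>M\<^esub> finsum M (\<lambda>k. \<ominus>\<^bsub>M\<^esub> ex' k) U"
    unfolding z_def using c by (intro M.finsum_addf) auto
  also have "\<dots> = b \<oplus>\<^bsub>M\<^esub> \<ominus>\<^bsub>M\<^esub> b"
    using finsum_neg[OF U(1) c(2)] e e' unfolding dec_def by simp
  also have "\<dots> = \<zero>\<^bsub>M\<^esub>" using bc by (rule M.r_neg)
  finally have z0: "finsum M z U = \<zero>\<^bsub>M\<^esub>" .
  have "ex l = ex' l"
  proof (cases "l \<in> U")
    case True
    then have "z l = \<zero>\<^bsub>M\<^esub>" using indep[OF U zin z0] by blast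
    moreover have "ex l \<in> carrier M" "ex' l \<in> carrier M" using c True by auto
    ultimately show ?thesis
      unfolding z_def using M.add.inv_solve_right'[of "\<zero>\<^bsub>M\<^esub>" "ex l" "ex' l"] by simp
  next
    case False
    then show ?thesis unfolding ex_def ex'_def coord_def U_def by auto
  qed
  then show ?thesis unfolding ex_def ex'_def .
qed

lemma proj_eq: assumes "dec T x b" shows "proj l b = coord l x T"
  unfolding proj_def
proof (rule the_equality)
  show "\<exists>T' x'. dec T' x' b \<and> coord l x T = coord l x' T'" using assms by blast
  fix y assume "\<exists>T' x'. dec T' x' b \<and> y = coord l x' T'"
  then show "y = coord l x T" using dec_unique assms by metis
qed

lemma proj_in: "l \<in> L \<Longrightarrow> b \<in> B \<Longrightarrow> proj l b \<in> Bf l"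
  using dec_exists proj_eq coord_in by metis

lemma proj_carrier: "l \<in> L \<Longrightarrow> b \<in> B \<Longrightarrow> proj l b \<in> carrier M"
  using proj_in Bf_carrier by blast

lemma proj_zero: "proj l \<zero>\<^bsub>M\<^esub> = \<zero>\<^bsub>M\<^esub>"
proof -
  have "dec {} (\<lambda>_. \<zero>\<^bsub>M\<^esub>) \<zero>\<^bsub>M\<^esub>" unfolding dec_def by simp
  then show ?thesis using proj_eq unfolding coord_def by simp
qed

lemma proj_add:
  assumes b: "b \<in> B" and b': "b' \<in> B"
  shows "proj l (b \<oplus>\<^bsub>M\<^esub> b') = proj l b \<oplus>\<^bsub>M\<^esub> proj l b'"
proof -
  obtain T x where d: "dec T x b" using dec_exists[OF b] by blast
  obtain T' x' where d': "dec T' x' b'" using dec_exists[OF b'] by blast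
  define U where "U = T \<union> T'"
  have U: "finite U" "U \<subseteq> L" using d d' unfolding U_def dec_def by auto
  define ex where "ex = (\<lambda>k. coord k x T)"
  define ex' where "ex' = (\<lambda>k. coord k x' T')"
  have e: "dec U ex b" unfolding ex_def by (rule dec_extend[OF d _ U]) (auto simp: U_def)
  have e': "dec U ex' b'" unfolding ex'_def by (rule dec_extend[OF d' _ U]) (auto simp: U_def)
  have c: "ex \<in> U \<rightarrow> carrier M" "ex' \<in> U \<rightarrow> carrier M"
    using dec_carrier[OF e] dec_carrier[OF e'] by auto
  have "dec U (\<lambda>k. ex k \<oplus>\<^bsub>M\<^esub> ex' k) (b \<oplus>\<^bsub>M\<^esub> b')"
    unfolding dec_def
  proof (intro conjI ballI)
    show "finite U" "U \<subseteq> L" using U by auto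
    fix k assume k: "k \<in> U"
    then have "k \<in> L" "ex k \<in> Bf k" "ex' k \<in> Bf k" using U e e' unfolding dec_def by auto
    then show "ex k \<oplus>\<^bsub>M\<^esub> ex' k \<in> Bf k" using sub_props[OF Bf_sub[OF \<open>k \<in> L\<close>]] by blast
  next
    show "b \<oplus>\<^bsub>M\<^esub> b' = finsum M (\<lambda>k. ex k \<oplus>\<^bsub>M\<^esub> ex' k) U"
      using c e e' unfolding dec_def by (simp add: M.finsum_addf)
  qed
  then have "proj l (b \<oplus>\<^bsub>M\<^esub> b') = coord l (\<lambda>k. ex k \<oplus>\<^bsub>M\<^esub> ex' k) U" by (rule proj_eq)
  also have "\<dots> = coord l ex U \<oplus>\<^bsub>M\<^esub> coord l ex' U" unfolding coord_def by simp
  also have "\<dots> = proj l b \<oplus>\<^bsub>M\<^esub> proj l b'" using proj_eq[OF e] proj_eq[OF e'] by simp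
  finally show ?thesis .
qed

lemma proj_smult:
  assumes b: "b \<in> B" and a: "a \<in> carrier D"
  shows "proj l (a \<odot>\<^bsub>M\<^esub> b) = a \<odot>\<^bsub>M\<^esub> proj l b"
proof -
  obtain T x where d: "dec T x b" using dec_exists[OF b] by blast
  have c: "x \<in> T \<rightarrow> carrier M" using dec_carrier[OF d] .
  have "dec T (\<lambda>k. a \<odot>\<^bsub>M\<^esub> x k) (a \<odot>\<^bsub>M\<^esub> b)"
    unfolding dec_def
  proof (intro conjI ballI)
    show "finite T" "T \<subseteq> L" using d unfolding dec_def by auto
    fix k assume k: "k \<in> T"
    then have "k \<in> L" "x k \<in> Bf k" using d unfolding dec_def by auto
    then show "a \<odot>\<^bsub>M\<^esub> x k \<in> Bf k" using a sub_props[OF Bf_sub[OF \<open>k \<in> L\<close>]] by blast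
  next
    show "a \<odot>\<^bsub>M\<^esub> b = finsum M (\<lambda>k. a \<odot>\<^bsub>M\<^esub> x k) T"
      using c d a unfolding dec_def by (simp add: finsum_smult_ldistr)
  qed
  then have "proj l (a \<odot>\<^bsub>M\<^esub> b) = coord l (\<lambda>k. a \<odot>\<^bsub>M\<^esub> x k) T" by (rule proj_eq)
  also have "\<dots> = a \<odot>\<^bsub>M\<^esub> coord l x T" unfolding coord_def using a by simp
  also have "\<dots> = a \<odot>\<^bsub>M\<^esub> proj l b" using proj_eq[OF d] by simp
  finally show ?thesis .
qed

lemma proj_act:
  assumes b: "b \<in> B" and g: "g \<in> carrier G"
  shows "proj l (\<phi> g b) = \<phi> g (proj l b)"
proof -
  obtain T x where d: "dec T x b" using dec_exists[OF b] by blast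
  have c: "x \<in> T \<rightarrow> carrier M" using dec_carrier[OF d] .
  have "dec T (\<lambda>k. \<phi> g (x k)) (\<phi> g b)"
    unfolding dec_def
  proof (intro conjI ballI)
    show "finite T" "T \<subseteq> L" using d unfolding dec_def by auto
    fix k assume k: "k \<in> T"
    then have "k \<in> L" "x k \<in> Bf k" using d unfolding dec_def by auto
    then show "\<phi> g (x k) \<in> Bf k" using g Bf_act by blast
  next
    show "\<phi> g b = finsum M (\<lambda>k. \<phi> g (x k)) T"
      using c d g unfolding dec_def by (simp add: act_finsum)
  qed
  then have "proj l (\<phi> g b) = coord l (\<lambda>k. \<phi> g (x k)) T" by (rule proj_eq)
  also have "\<dots> = \<phi> g (coord l x T)" unfolding coord_def using g by simp
  also have "\<dots> = \<phi> g (proj l b)" using proj_eq[OF d] by simp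
  finally show ?thesis .
qed

lemma proj_nonzero:
  assumes b: "b \<in> B" "b \<noteq> \<zero>\<^bsub>M\<^esub>"
  shows "\<exists>l\<in>L. proj l b \<noteq> \<zero>\<^bsub>M\<^esub>"
proof (rule ccontr)
  assume n: "\<not> (\<exists>l\<in>L. proj l b \<noteq> \<zero>\<^bsub>M\<^esub>)"
  obtain T x where d: "dec T x b" using dec_exists[OF b(1)] by blast
  have "\<forall>k\<in>T. x k = \<zero>\<^bsub>M\<^esub>"
  proof
    fix k assume k: "k \<in> T"
    then have "k \<in> L" using d unfolding dec_def by auto
    then have "proj k b = \<zero>\<^bsub>M\<^esub>" using n by blast
    then show "x k = \<zero>\<^bsub>M\<^esub>" using proj_eq[OF d, of k] k unfolding coord_def by simp
  qed
  then have "finsum M x T = finsum M (\<lambda>_. \<zero>\<^bsub>M\<^esub>) T"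
    by (intro M.finsum_cong') auto
  then have "b = \<zero>\<^bsub>M\<^esub>" using d unfolding dec_def by simp
  then show False using b by blast
qed


lemma P_carrier: "p \<in> P \<Longrightarrow> p \<in> carrier D"
  using annB unfolding ann_def by blast

lemma P_annB: "p \<in> P \<Longrightarrow> b \<in> B \<Longrightarrow> p \<odot>\<^bsub>M\<^esub> b = \<zero>\<^bsub>M\<^esub>"
  using annB unfolding ann_def by blast

lemma P_quot: "p \<in> P \<Longrightarrow> x \<in> carrier M \<Longrightarrow> p \<odot>\<^bsub>M\<^esub> x \<in> B"
  using annQ unfolding ann_quot_def by blast

lemma B_ne: "B \<noteq> carrier M"
  using sq unfolding simple_DG_quotient_def by blast

lemma B_max: "DG_submodule D G M \<phi> N \<Longrightarrow> B \<subseteq> N \<Longrightarrow> N \<subseteq> carrier M \<Longrightarrow> N = B \<or> N = carrier M"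
  using sq unfolding simple_DG_quotient_def by blast

lemma PA0:
  assumes p: "p \<in> P" and x: "x \<in> carrier M"
  shows "p \<odot>\<^bsub>M\<^esub> x = \<zero>\<^bsub>M\<^esub>"
proof (rule ccontr)
  assume ne: "p \<odot>\<^bsub>M\<^esub> x \<noteq> \<zero>\<^bsub>M\<^esub>"
  have pc: "p \<in> carrier D" using P_carrier[OF p] .
  have sB: "p \<odot>\<^bsub>M\<^esub> x \<in> B" using P_quot[OF p x] .
  obtain l where l: "l \<in> L" "proj l (p \<odot>\<^bsub>M\<^esub> x) \<noteq> \<zero>\<^bsub>M\<^esub>"
    using proj_nonzero[OF sB ne] by blast
  define h where "h = (\<lambda>y. proj l (p \<odot>\<^bsub>M\<^esub> y))"
  have hB: "\<And>y. y \<in> carrier M \<Longrightarrow> p \<odot>\<^bsub>M\<^esub> y \<in> B" using P_quot[OF p] .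
  have h_add: "\<forall>y\<in>carrier M. \<forall>z\<in>carrier M. h (y \<oplus>\<^bsub>M\<^esub> z) = h y \<oplus>\<^bsub>M\<^esub> h z"
    unfolding h_def using pc hB by (simp add: smult_r_distr proj_add)
  have h_smult: "\<forall>a\<in>carrier D. \<forall>y\<in>carrier M. h (a \<odot>\<^bsub>M\<^esub> y) = a \<odot>\<^bsub>M\<^esub> h y"
  proof (intro ballI)
    fix a y assume a: "a \<in> carrier D" and y: "y \<in> carrier M"
    have "p \<odot>\<^bsub>M\<^esub> (a \<odot>\<^bsub>M\<^esub> y) = a \<odot>\<^bsub>M\<^esub> (p \<odot>\<^bsub>M\<^esub> y)"
      using a y pc by (metis R.m_comm smult_assoc1)
    then show "h (a \<odot>\<^bsub>M\<^esub> y) = a \<odot>\<^bsub>M\<^esub> h y"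
      unfolding h_def using proj_smult[OF hB[OF y] a] by simp
  qed
  have h_act: "\<forall>g\<in>carrier G. \<forall>y\<in>carrier M. h (\<phi> g y) = \<phi> g (h y)"
  proof (intro ballI)
    fix g y assume g: "g \<in> carrier G" and y: "y \<in> carrier M"
    have "p \<odot>\<^bsub>M\<^esub> (\<phi> g y) = \<phi> g (p \<odot>\<^bsub>M\<^esub> y)"
      using act_smult[OF g pc y] by simp
    then show "h (\<phi> g y) = \<phi> g (h y)"
      unfolding h_def using proj_act[OF hB[OF y] g] by simp
  qed
  have h_cl: "\<forall>y\<in>carrier M. h y \<in> carrier M"
    unfolding h_def using proj_carrier[OF l(1)] hB by blast
  have hh: "is_hom h" unfolding is_hom_def using h_add h_smult h_act h_cl by blast
  have img: "h ` carrier M = Bf l"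
  proof -
    have "DG_submodule D G M \<phi> (h ` carrier M)" by (rule hom_image[OF hh])
    moreover have "h ` carrier M \<subseteq> Bf l" unfolding h_def using proj_in[OF l(1)] hB by blast
    moreover have "h ` carrier M \<noteq> {\<zero>\<^bsub>M\<^esub>}"
    proof
      assume "h ` carrier M = {\<zero>\<^bsub>M\<^esub>}"
      then have "h x = \<zero>\<^bsub>M\<^esub>" using x by blast
      then show False using l(2) unfolding h_def by simp
    qed
    ultimately show ?thesis using simpl l(1) unfolding simple_DG_submodule_def by blast
  qed
  have ker: "{y \<in> carrier M. h y = \<zero>\<^bsub>M\<^esub>} = B"
  proof -
    have "DG_submodule D G M \<phi> {y \<in> carrier M. h y = \<zero>\<^bsub>M\<^esub>}" by (rule hom_kernel[OF hh])
    moreover have "B \<subseteq> {y \<in> carrier M. h y = \<zero>\<^bsub>M\<^esub>}"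
      unfolding h_def using P_annB[OF p] B_carrier proj_zero by auto
    moreover have "{y \<in> carrier M. h y = \<zero>\<^bsub>M\<^esub>} \<noteq> carrier M"
      using l(2) x unfolding h_def by blast
    ultimately show ?thesis using B_max by blast
  qed
  have "quotient_DG_iso D G M \<phi> B (Bf l)"
    unfolding quotient_DG_iso_def using img h_add h_smult h_act ker by blast
  then show False using niso l(1) by blast
qed


lemma P_ideal: "ideal P D" using maxP by (simp add: maximalideal_def)

lemma P_absg: "abelian_subgroup P D"
  using abelian_subgroupI3[OF ideal.axioms(1)[OF P_ideal] R.is_abelian_group] .

lemma rcos_hom: "ring_hom_ring D (D Quot P) (a_r_coset D P)"
  using ideal.rcos_ring_hom_ring[OF P_ideal] .

lemma rcos_zero_iff: "t \<in> carrier D \<Longrightarrow> a_r_coset D P t = P \<longleftrightarrow> t \<in> P"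
proof
  assume t: "t \<in> carrier D" and e: "a_r_coset D P t = P"
  have "t \<in> a_r_coset D P t" using abelian_subgroup.a_rcos_self[OF P_absg t] .
  then show "t \<in> P" using e by simp
next
  assume "t \<in> P" then show "a_r_coset D P t = P" using R.a_rcos_zero[OF P_ideal] by blast
qed

lemma Q_zero: "\<zero>\<^bsub>D Quot P\<^esub> = P"
  unfolding FactRing_def by simp

lemma Q_carrier: "carrier (D Quot P) = (\<Union>a\<in>carrier D. {a_r_coset D P a})"
  unfolding FactRing_def A_RCOSETS_def' by simp

lemma inv_mod:
  assumes t: "t \<in> carrier D" "t \<notin> P"
  shows "\<exists>s\<in>carrier D. s \<otimes>\<^bsub>D\<^esub> t \<oplus>\<^bsub>D\<^esub> \<ominus>\<^bsub>D\<^esub> \<one>\<^bsub>D\<^esub> \<in> P"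
proof -
  interpret Q: field "D Quot P"
    using maximalideal.quotient_is_field[OF maxP] R.is_cring by blast
  interpret H: ring_hom_ring D "D Quot P" "a_r_coset D P" by (rule rcos_hom)
  have tc: "a_r_coset D P t \<in> carrier (D Quot P)" using t(1) by simp
  have tnz: "a_r_coset D P t \<noteq> \<zero>\<^bsub>D Quot P\<^esub>"
    unfolding Q_zero using rcos_zero_iff[OF t(1)] t(2) by blast
  then have tu: "a_r_coset D P t \<in> Units (D Quot P)" using tc Q.field_Units by blast
  define u where "u = inv\<^bsub>D Quot P\<^esub> (a_r_coset D P t)"
  have uc: "u \<in> carrier (D Quot P)" unfolding u_def using tu by simp
  have ui: "u \<otimes>\<^bsub>D Quot P\<^esub> a_r_coset D P t = \<one>\<^bsub>D Quot P\<^esub>" unfolding u_def using tu by simp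
  obtain s where s: "s \<in> carrier D" "u = a_r_coset D P s"
    using uc unfolding Q_carrier by blast
  have "a_r_coset D P (s \<otimes>\<^bsub>D\<^esub> t) = a_r_coset D P \<one>\<^bsub>D\<^esub>"
    using ui s t(1) by simp
  moreover have "s \<otimes>\<^bsub>D\<^esub> t \<in> a_r_coset D P (s \<otimes>\<^bsub>D\<^esub> t)"
    using abelian_subgroup.a_rcos_self[OF P_absg] s t R.m_closed by blast
  ultimately have "s \<otimes>\<^bsub>D\<^esub> t \<in> a_r_coset D P \<one>\<^bsub>D\<^esub>" by simp
  then have "s \<otimes>\<^bsub>D\<^esub> t \<oplus>\<^bsub>D\<^esub> \<ominus>\<^bsub>D\<^esub> \<one>\<^bsub>D\<^esub> \<in> P"
    using abelian_subgroup.a_rcos_module_imp[OF P_absg R.one_closed] by blast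
  then show ?thesis using s by blast
qed

lemma unit_act:
  assumes t: "t \<in> carrier D" "t \<notin> P"
  shows "\<exists>s\<in>carrier D. \<forall>y\<in>carrier M. s \<odot>\<^bsub>M\<^esub> (t \<odot>\<^bsub>M\<^esub> y) = y"
proof -
  obtain s where s: "s \<in> carrier D" "s \<otimes>\<^bsub>D\<^esub> t \<oplus>\<^bsub>D\<^esub> \<ominus>\<^bsub>D\<^esub> \<one>\<^bsub>D\<^esub> \<in> P"
    using inv_mod[OF t] by blast
  define q where "q = s \<otimes>\<^bsub>D\<^esub> t \<oplus>\<^bsub>D\<^esub> \<ominus>\<^bsub>D\<^esub> \<one>\<^bsub>D\<^esub>"
  have qc: "q \<in> carrier D" unfolding q_def using s t by simp
  have st: "s \<otimes>\<^bsub>D\<^esub> t = q \<oplus>\<^bsub>D\<^esub> \<one>\<^bsub>D\<^esub>"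
    unfolding q_def using s t by (simp add: R.a_assoc R.l_neg)
  have "\<forall>y\<in>carrier M. s \<odot>\<^bsub>M\<^esub> (t \<odot>\<^bsub>M\<^esub> y) = y"
  proof
    fix y assume y: "y \<in> carrier M"
    have "s \<odot>\<^bsub>M\<^esub> (t \<odot>\<^bsub>M\<^esub> y) = (q \<oplus>\<^bsub>D\<^esub> \<one>\<^bsub>D\<^esub>) \<odot>\<^bsub>M\<^esub> y"
      using s t y st by (simp add: smult_assoc1[symmetric])
    also have "\<dots> = q \<odot>\<^bsub>M\<^esub> y \<oplus>\<^bsub>M\<^esub> y" using qc y by (simp add: smult_l_distr)
    also have "\<dots> = y" using PA0[OF s(2)[folded q_def] y] y by simp
    finally show "s \<odot>\<^bsub>M\<^esub> (t \<odot>\<^bsub>M\<^esub> y) = y" .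
  qed
  then show ?thesis using s by blast
qed

lemma hom_add_pow: "a_r_coset D P ([(n::nat)] \<cdot>\<^bsub>D\<^esub> \<one>\<^bsub>D\<^esub>) = [n] \<cdot>\<^bsub>D Quot P\<^esub> \<one>\<^bsub>D Quot P\<^esub>"
proof -
  interpret H: ring_hom_ring D "D Quot P" "a_r_coset D P" by (rule rcos_hom)
  show ?thesis
  proof (induct n)
    case 0
    then show ?case by simp
  next
    case (Suc n)
    have "a_r_coset D P ([Suc n] \<cdot>\<^bsub>D\<^esub> \<one>\<^bsub>D\<^esub>) = a_r_coset D P ([n] \<cdot>\<^bsub>D\<^esub> \<one>\<^bsub>D\<^esub> \<oplus>\<^bsub>D\<^esub> \<one>\<^bsub>D\<^esub>)"
      by (simp add: R.add.nat_pow_Suc)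
    also have "\<dots> = a_r_coset D P ([n] \<cdot>\<^bsub>D\<^esub> \<one>\<^bsub>D\<^esub>) \<oplus>\<^bsub>D Quot P\<^esub> \<one>\<^bsub>D Quot P\<^esub>"
      by simp
    also have "\<dots> = [Suc n] \<cdot>\<^bsub>D Quot P\<^esub> \<one>\<^bsub>D Quot P\<^esub>"
      using Suc by (simp add: H.S.add.nat_pow_Suc)
    finally show ?case .
  qed
qed

lemma m_notin_P: "(n::nat) > 0 \<Longrightarrow> [n] \<cdot>\<^bsub>D\<^esub> \<one>\<^bsub>D\<^esub> \<notin> P"
proof
  assume n: "n > 0" and m: "[n] \<cdot>\<^bsub>D\<^esub> \<one>\<^bsub>D\<^esub> \<in> P"
  have "a_r_coset D P ([n] \<cdot>\<^bsub>D\<^esub> \<one>\<^bsub>D\<^esub>) = P"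
    using rcos_zero_iff m by simp
  then have "[n] \<cdot>\<^bsub>D Quot P\<^esub> \<one>\<^bsub>D Quot P\<^esub> = \<zero>\<^bsub>D Quot P\<^esub>"
    using hom_add_pow Q_zero by simp
  then show False using charz n unfolding char_zero_ring_def by blast
qed

lemma smult_add_pow: "y \<in> carrier M \<Longrightarrow> ([n] \<cdot>\<^bsub>D\<^esub> \<one>\<^bsub>D\<^esub>) \<odot>\<^bsub>M\<^esub> y = [(n::nat)] \<cdot>\<^bsub>M\<^esub> y"
proof (induct n)
  case 0 then show ?case by simp
next
  case (Suc n)
  then show ?case by (simp add: R.add.nat_pow_Suc M.add.nat_pow_Suc smult_l_distr)
qed

lemma finsum_const_M: "y \<in> carrier M \<Longrightarrow> finsum M (\<lambda>_. y) S = [card S] \<cdot>\<^bsub>M\<^esub> y"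
  using M.add.finprod_const by blast


definition msum :: "'m set \<Rightarrow> 'm set \<Rightarrow> 'm set" where "msum U V = {z. \<exists>u\<in>U. \<exists>v\<in>V. z = u \<oplus>\<^bsub>M\<^esub> v}"

lemma msum_sub:
  assumes U1: "submodule U1 D M" and V1: "submodule V1 D M"
  shows "submodule (msum U1 V1) D M"
proof (rule submoduleI)
  note SX = sub_props[OF U1] and SY = sub_props[OF V1]
  show "msum U1 V1 \<subseteq> carrier M" unfolding msum_def using SX(1) SY(1) by auto
  have "\<zero>\<^bsub>M\<^esub> = \<zero>\<^bsub>M\<^esub> \<oplus>\<^bsub>M\<^esub> \<zero>\<^bsub>M\<^esub>" by simp
  then show "\<zero>\<^bsub>M\<^esub> \<in> msum U1 V1" unfolding msum_def using SX(2) SY(2) by blast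
  show "\<ominus>\<^bsub>M\<^esub> a \<in> msum U1 V1" if ha: "a \<in> msum U1 V1" for a
  proof -
    obtain x y where xy: "a = x \<oplus>\<^bsub>M\<^esub> y" "x \<in> U1" "y \<in> V1" using ha unfolding msum_def by blast
    have c: "x \<in> carrier M" "y \<in> carrier M" using xy SX(1) SY(1) by auto
    have "\<ominus>\<^bsub>M\<^esub> a = \<ominus>\<^bsub>M\<^esub> x \<oplus>\<^bsub>M\<^esub> \<ominus>\<^bsub>M\<^esub> y" using xy(1) c by (simp add: M.minus_add)
    then show ?thesis unfolding msum_def using xy SX(3) SY(3) by blast
  qed
  show "a \<oplus>\<^bsub>M\<^esub> b \<in> msum U1 V1" if ha: "a \<in> msum U1 V1" and hb: "b \<in> msum U1 V1" for a b
  proof -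
    obtain x y where xy: "a = x \<oplus>\<^bsub>M\<^esub> y" "x \<in> U1" "y \<in> V1" using ha unfolding msum_def by blast
    obtain x' y' where xy': "b = x' \<oplus>\<^bsub>M\<^esub> y'" "x' \<in> U1" "y' \<in> V1" using hb unfolding msum_def by blast
    have c: "x \<in> carrier M" "y \<in> carrier M" "x' \<in> carrier M" "y' \<in> carrier M"
      using xy xy' SX(1) SY(1) by auto
    have "a \<oplus>\<^bsub>M\<^esub> b = (x \<oplus>\<^bsub>M\<^esub> x') \<oplus>\<^bsub>M\<^esub> (y \<oplus>\<^bsub>M\<^esub> y')"
      using xy(1) xy'(1) c by (simp add: M.a_ac)
    then show ?thesis unfolding msum_def using xy xy' SX(5) SY(5) by blast
  qed
  show "a \<odot>\<^bsub>M\<^esub> b \<in> msum U1 V1" if ha: "a \<in> carrier D" and hb: "b \<in> msum U1 V1" for a b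
  proof -
    obtain x y where xy: "b = x \<oplus>\<^bsub>M\<^esub> y" "x \<in> U1" "y \<in> V1" using hb unfolding msum_def by blast
    have c: "x \<in> carrier M" "y \<in> carrier M" using xy SX(1) SY(1) by auto
    have "a \<odot>\<^bsub>M\<^esub> b = a \<odot>\<^bsub>M\<^esub> x \<oplus>\<^bsub>M\<^esub> a \<odot>\<^bsub>M\<^esub> y" using xy(1) c ha by (simp add: smult_r_distr)
    then show ?thesis unfolding msum_def using xy SX(4) SY(4) ha by blast
  qed
qed

lemma msum_left: assumes "submodule V1 D M" "x \<in> U1" "U1 \<subseteq> carrier M" shows "x \<in> msum U1 V1"
proof -
  have "x = x \<oplus>\<^bsub>M\<^esub> \<zero>\<^bsub>M\<^esub>" using assms by auto
  then show ?thesis unfolding msum_def using assms(2) sub_props(2)[OF assms(1)] by blast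
qed

lemma msum_right: assumes "submodule U1 D M" "y \<in> V1" "V1 \<subseteq> carrier M" shows "y \<in> msum U1 V1"
proof -
  have "y = \<zero>\<^bsub>M\<^esub> \<oplus>\<^bsub>M\<^esub> y" using assms by auto
  then show ?thesis unfolding msum_def using assms(2) sub_props(2)[OF assms(1)] by blast
qed

lemma cyc_sub: assumes w: "w \<in> carrier M" shows "submodule {t \<odot>\<^bsub>M\<^esub> w | t. t \<in> carrier D} D M"
proof (rule submoduleI)
  show "{t \<odot>\<^bsub>M\<^esub> w | t. t \<in> carrier D} \<subseteq> carrier M" using w by auto
  have "\<zero>\<^bsub>M\<^esub> = \<zero>\<^bsub>D\<^esub> \<odot>\<^bsub>M\<^esub> w" using w by simp
  then show "\<zero>\<^bsub>M\<^esub> \<in> {t \<odot>\<^bsub>M\<^esub> w | t. t \<in> carrier D}" by blast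
  show "\<ominus>\<^bsub>M\<^esub> a \<in> {t \<odot>\<^bsub>M\<^esub> w | t. t \<in> carrier D}" if ha: "a \<in> {t \<odot>\<^bsub>M\<^esub> w | t. t \<in> carrier D}" for a
  proof -
    obtain t where t: "a = t \<odot>\<^bsub>M\<^esub> w" "t \<in> carrier D" using ha by blast
    have "\<ominus>\<^bsub>M\<^esub> a = (\<ominus>\<^bsub>D\<^esub> t) \<odot>\<^bsub>M\<^esub> w" using t w by (simp add: smult_l_minus)
    then show ?thesis using t by blast
  qed
  show "a \<oplus>\<^bsub>M\<^esub> b \<in> {t \<odot>\<^bsub>M\<^esub> w | t. t \<in> carrier D}"
    if ha: "a \<in> {t \<odot>\<^bsub>M\<^esub> w | t. t \<in> carrier D}" and hb: "b \<in> {t \<odot>\<^bsub>M\<^esub> w | t. t \<in> carrier D}" for a b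
  proof -
    obtain t where t: "a = t \<odot>\<^bsub>M\<^esub> w" "t \<in> carrier D" using ha by blast
    obtain t' where t': "b = t' \<odot>\<^bsub>M\<^esub> w" "t' \<in> carrier D" using hb by blast
    have "a \<oplus>\<^bsub>M\<^esub> b = (t \<oplus>\<^bsub>D\<^esub> t') \<odot>\<^bsub>M\<^esub> w" using t t' w by (simp add: smult_l_distr)
    then show ?thesis using t t' by blast
  qed
  show "a \<odot>\<^bsub>M\<^esub> b \<in> {t \<odot>\<^bsub>M\<^esub> w | t. t \<in> carrier D}"
    if ha: "a \<in> carrier D" and hb: "b \<in> {t \<odot>\<^bsub>M\<^esub> w | t. t \<in> carrier D}" for a b
  proof -
    obtain t where t: "b = t \<odot>\<^bsub>M\<^esub> w" "t \<in> carrier D" using hb by blast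
    have "a \<odot>\<^bsub>M\<^esub> b = (a \<otimes>\<^bsub>D\<^esub> t) \<odot>\<^bsub>M\<^esub> w" using t ha w by (simp add: smult_assoc1)
    then show ?thesis using t ha by blast
  qed
qed

lemma extend_step:
  assumes C: "submodule C D M" "B \<inter> C = {\<zero>\<^bsub>M\<^esub>}" and w: "w \<in> carrier M" "w \<notin> msum B C"
  shows "B \<inter> msum C {t \<odot>\<^bsub>M\<^esub> w | t. t \<in> carrier D} = {\<zero>\<^bsub>M\<^esub>}"
proof
  note SC = sub_props[OF C(1)] and SB = sub_props[OF B_sub]
  show "{\<zero>\<^bsub>M\<^esub>} \<subseteq> B \<inter> msum C {t \<odot>\<^bsub>M\<^esub> w | t. t \<in> carrier D}"
    using SB(2) sub_props(2)[OF msum_sub[OF C(1) cyc_sub[OF w(1)]]] by blast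
  show "B \<inter> msum C {t \<odot>\<^bsub>M\<^esub> w | t. t \<in> carrier D} \<subseteq> {\<zero>\<^bsub>M\<^esub>}"
  proof
    fix y assume y: "y \<in> B \<inter> msum C {t \<odot>\<^bsub>M\<^esub> w | t. t \<in> carrier D}"
    then obtain c t where ct: "y = c \<oplus>\<^bsub>M\<^esub> t \<odot>\<^bsub>M\<^esub> w" "c \<in> C" "t \<in> carrier D"
      unfolding msum_def by blast
    have cc: "c \<in> carrier M" using ct SC(1) by auto
    have yB: "y \<in> B" using y by blast
    have yc: "y \<in> carrier M" using yB SB(1) by auto
    show "y \<in> {\<zero>\<^bsub>M\<^esub>}"
    proof (cases "t \<in> P")
      case True
      then have "t \<odot>\<^bsub>M\<^esub> w = \<zero>\<^bsub>M\<^esub>" using PA0 w(1) by blast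
      then have "y = c" using ct cc by simp
      then show ?thesis using C(2) yB ct(2) by blast
    next
      case False
      obtain s where s: "s \<in> carrier D" "\<forall>z\<in>carrier M. s \<odot>\<^bsub>M\<^esub> (t \<odot>\<^bsub>M\<^esub> z) = z"
        using unit_act[OF ct(3) False] by blast
      have tw: "t \<odot>\<^bsub>M\<^esub> w = \<ominus>\<^bsub>M\<^esub> c \<oplus>\<^bsub>M\<^esub> y"
        using ct(1) cc w(1) ct(3) by (simp add: M.r_neg1)
      have "w = s \<odot>\<^bsub>M\<^esub> (t \<odot>\<^bsub>M\<^esub> w)" using s w(1) by simp
      also have "\<dots> = s \<odot>\<^bsub>M\<^esub> y \<oplus>\<^bsub>M\<^esub> s \<odot>\<^bsub>M\<^esub> (\<ominus>\<^bsub>M\<^esub> c)"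
        unfolding tw using s cc yc by (simp add: smult_r_distr M.a_comm)
      finally have "w \<in> msum B C" unfolding msum_def using SB(4) SC(3) SC(4) s(1) yB ct(2) by blast
      then show ?thesis using w(2) by blast
    qed
  qed
qed

lemma greedy:
  assumes "finite F" "F \<subseteq> carrier M"
  shows "\<exists>C. submodule C D M \<and> B \<inter> C = {\<zero>\<^bsub>M\<^esub>} \<and> F \<subseteq> msum B C"
  using assms
proof (induct F rule: finite_induct)
  case empty
  have "submodule {\<zero>\<^bsub>M\<^esub>} D M"
    by (rule submoduleI) auto
  moreover have "B \<inter> {\<zero>\<^bsub>M\<^esub>} = {\<zero>\<^bsub>M\<^esub>}" using sub_props(2)[OF B_sub] by blast
  ultimately show ?case by blast
next
  case (insert w F)
  then obtain C where C: "submodule C D M" "B \<inter> C = {\<zero>\<^bsub>M\<^esub>}" "F \<subseteq> msum B C" by auto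
  have w: "w \<in> carrier M" using insert by auto
  show ?case
  proof (cases "w \<in> msum B C")
    case True then show ?thesis using C by blast
  next
    case False
    define C' where "C' = msum C {t \<odot>\<^bsub>M\<^esub> w | t. t \<in> carrier D}"
    have C'sub: "submodule C' D M" unfolding C'_def by (rule msum_sub[OF C(1) cyc_sub[OF w]])
    have int: "B \<inter> C' = {\<zero>\<^bsub>M\<^esub>}" unfolding C'_def by (rule extend_step[OF C(1) C(2) w False])
    have CC': "C \<subseteq> C'"
    proof
      fix c assume c: "c \<in> C"
      show "c \<in> C'" unfolding C'_def by (rule msum_left[OF cyc_sub[OF w] c sub_props(1)[OF C(1)]])
    qed
    have "msum B C \<subseteq> msum B C'"
    proof
      fix z assume "z \<in> msum B C"
      then obtain b c where bc: "b \<in> B" "c \<in> C" "z = b \<oplus>\<^bsub>M\<^esub> c" unfolding msum_def by blast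
      have "c \<in> C'" using CC' bc(2) by blast
      then show "z \<in> msum B C'" unfolding msum_def using bc(1,3) by blast
    qed
    moreover have "w \<in> C'"
    proof -
      have "w = \<one>\<^bsub>D\<^esub> \<odot>\<^bsub>M\<^esub> w" using w by simp
      then have ww: "w \<in> {t \<odot>\<^bsub>M\<^esub> w | t. t \<in> carrier D}" using R.one_closed by blast
      have "{t \<odot>\<^bsub>M\<^esub> w | t. t \<in> carrier D} \<subseteq> carrier M" using sub_props(1)[OF cyc_sub[OF w]] .
      then show ?thesis unfolding C'_def by (rule msum_right[OF C(1) ww])
    qed
    moreover have "w \<in> msum B C'" by (rule msum_right[OF B_sub \<open>w \<in> C'\<close> sub_props(1)[OF C'sub]])
    ultimately have "insert w F \<subseteq> msum B C'" using C(3) by blast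
    then show ?thesis using C'sub int by blast
  qed
qed


lemma exists_C: "\<exists>C. submodule C D M \<and> B \<inter> C = {\<zero>\<^bsub>M\<^esub>} \<and> carrier M \<subseteq> msum B C"
proof -
  obtain a where a: "a \<in> carrier M" "a \<notin> B" using B_ne sub_props(1)[OF B_sub] by blast
  define F where "F = (\<lambda>g. \<phi> g a) ` carrier G"
  have F: "finite F" "F \<subseteq> carrier M" unfolding F_def using finG a(1) by auto
  obtain C where C: "submodule C D M" "B \<inter> C = {\<zero>\<^bsub>M\<^esub>}" "F \<subseteq> msum B C"
    using greedy[OF F] by blast
  define S where "S = msum B C"
  have Ssub: "submodule S D M" unfolding S_def by (rule msum_sub[OF B_sub C(1)])
  note SS = sub_props[OF Ssub]
  define N where "N = {x \<in> carrier M. \<forall>g\<in>carrier G. \<phi> g x \<in> S}"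
  have Nsub: "DG_submodule D G M \<phi> N"
    unfolding DG_submodule_def
  proof (intro conjI ballI)
    show "submodule N D M"
    proof (rule submoduleI)
      show "N \<subseteq> carrier M" unfolding N_def by blast
      show "\<zero>\<^bsub>M\<^esub> \<in> N" unfolding N_def using SS(2) by simp
      show "\<ominus>\<^bsub>M\<^esub> x \<in> N" if hx: "x \<in> N" for x
        using hx SS(3) unfolding N_def by (simp add: act_neg)
      show "x \<oplus>\<^bsub>M\<^esub> y \<in> N" if hx: "x \<in> N" and hy: "y \<in> N" for x y
        using hx hy SS(5) unfolding N_def by (simp add: act_add)
      show "r \<odot>\<^bsub>M\<^esub> x \<in> N" if hr: "r \<in> carrier D" and hx: "x \<in> N" for r x
        using hr hx SS(4) unfolding N_def by (simp add: act_smult)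
    qed
    fix h x assume h: "h \<in> carrier G" and x: "x \<in> N"
    show "\<phi> h x \<in> N" unfolding N_def
    proof (intro CollectI conjI ballI)
      show "\<phi> h x \<in> carrier M" using h x unfolding N_def by simp
      fix g assume g: "g \<in> carrier G"
      have "\<phi> g (\<phi> h x) = \<phi> (g \<otimes>\<^bsub>G\<^esub> h) x" using g h x unfolding N_def by (simp add: act_mult)
      then show "\<phi> g (\<phi> h x) \<in> S" using g h x unfolding N_def by simp
    qed
  qed
  have BN: "B \<subseteq> N"
  proof
    fix b assume b: "b \<in> B"
    have "\<forall>g\<in>carrier G. \<phi> g b \<in> S"
      unfolding S_def using msum_left[OF C(1) _ sub_props(1)[OF B_sub]] B_act b by blast
    then show "b \<in> N" unfolding N_def using b B_carrier by blast
  qed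
  have aN: "a \<in> N" unfolding N_def S_def using a(1) C(3) unfolding F_def by blast
  have "N = carrier M" using B_max[OF Nsub BN] aN a(2) unfolding N_def by blast
  then have "carrier M \<subseteq> S"
  proof -
    assume e: "N = carrier M"
    show ?thesis
    proof
      fix x assume x: "x \<in> carrier M"
      then have "\<phi> \<one>\<^bsub>G\<^esub> x \<in> S" using e unfolding N_def by blast
      then show "x \<in> S" using x by simp
    qed
  qed
  then show ?thesis using C(1,2) unfolding S_def by blast
qed


end

locale L7C = L7 +
  fixes C
  assumes Csub: "submodule C D M" and Cint: "B \<inter> C = {\<zero>\<^bsub>M\<^esub>}" and Ccov: "carrier M \<subseteq> msum B C"
begin

lemma C_carrier: "c \<in> C \<Longrightarrow> c \<in> carrier M"
  using sub_props(1)[OF Csub] by blast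

lemma BC_uniq:
  assumes b: "b \<in> B" "b' \<in> B" and c: "c \<in> C" "c' \<in> C" and e: "b \<oplus>\<^bsub>M\<^esub> c = b' \<oplus>\<^bsub>M\<^esub> c'"
  shows "b = b'"
proof -
  have bc: "b \<in> carrier M" "b' \<in> carrier M" using b B_carrier by auto
  have cc: "c \<in> carrier M" "c' \<in> carrier M" using c C_carrier by auto
  define d where "d = c' \<oplus>\<^bsub>M\<^esub> \<ominus>\<^bsub>M\<^esub> c"
  have dC: "d \<in> C" unfolding d_def using c sub_props[OF Csub] by blast
  have dc: "d \<in> carrier M" unfolding d_def using cc by simp
  have "b' \<oplus>\<^bsub>M\<^esub> d = (b' \<oplus>\<^bsub>M\<^esub> c') \<oplus>\<^bsub>M\<^esub> \<ominus>\<^bsub>M\<^esub> c"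
    unfolding d_def using bc cc by (simp add: M.a_assoc)
  also have "\<dots> = (b \<oplus>\<^bsub>M\<^esub> c) \<oplus>\<^bsub>M\<^esub> \<ominus>\<^bsub>M\<^esub> c" using e by simp
  also have "\<dots> = b" using bc cc by (simp add: M.a_assoc M.r_neg)
  finally have bd: "b' \<oplus>\<^bsub>M\<^esub> d = b" .
  have "d = \<ominus>\<^bsub>M\<^esub> b' \<oplus>\<^bsub>M\<^esub> b"
    using bd[symmetric] bc dc by (simp add: M.r_neg1)
  then have "d \<in> B" using b sub_props[OF B_sub] by simp
  then have "d = \<zero>\<^bsub>M\<^esub>" using dC Cint by blast
  then show ?thesis using bd bc by simp
qed

definition "pr x = (THE b. b \<in> B \<and> (\<exists>c\<in>C. x = b \<oplus>\<^bsub>M\<^esub> c))"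

lemma pr_eq: assumes "b \<in> B" "c \<in> C" "x = b \<oplus>\<^bsub>M\<^esub> c" shows "pr x = b"
  unfolding pr_def
proof (rule the_equality)
  show "b \<in> B \<and> (\<exists>c\<in>C. x = b \<oplus>\<^bsub>M\<^esub> c)" using assms by blast
  fix b' assume "b' \<in> B \<and> (\<exists>c\<in>C. x = b' \<oplus>\<^bsub>M\<^esub> c)"
  then show "b' = b" using BC_uniq assms by metis
qed

lemma pr_spec: assumes x: "x \<in> carrier M" shows "pr x \<in> B \<and> (\<exists>c\<in>C. x = pr x \<oplus>\<^bsub>M\<^esub> c)"
proof -
  obtain b c where "b \<in> B" "c \<in> C" "x = b \<oplus>\<^bsub>M\<^esub> c" using Ccov x unfolding msum_def by blast
  then show ?thesis using pr_eq by metis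
qed

lemma pr_B: "b \<in> B \<Longrightarrow> pr b = b"
  using pr_eq[of b "\<zero>\<^bsub>M\<^esub>" b] sub_props(2)[OF Csub] B_carrier by simp

lemma pr_inB: "x \<in> carrier M \<Longrightarrow> pr x \<in> B"
  using pr_spec by blast

lemma pr_add: assumes x: "x \<in> carrier M" and y: "y \<in> carrier M"
  shows "pr (x \<oplus>\<^bsub>M\<^esub> y) = pr x \<oplus>\<^bsub>M\<^esub> pr y"
proof -
  obtain c where c: "c \<in> C" "x = pr x \<oplus>\<^bsub>M\<^esub> c" using pr_spec[OF x] by blast
  obtain c' where c': "c' \<in> C" "y = pr y \<oplus>\<^bsub>M\<^esub> c'" using pr_spec[OF y] by blast
  have b: "pr x \<in> B" "pr y \<in> B" using pr_inB x y by auto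
  have bc: "pr x \<in> carrier M" "pr y \<in> carrier M" using b B_carrier by auto
  have cc: "c \<in> carrier M" "c' \<in> carrier M" using c c' C_carrier by auto
  have "x \<oplus>\<^bsub>M\<^esub> y = (pr x \<oplus>\<^bsub>M\<^esub> pr y) \<oplus>\<^bsub>M\<^esub> (c \<oplus>\<^bsub>M\<^esub> c')"
    using c(2) c'(2) bc cc by (metis M.a_ac(1) M.a_ac(3) M.add.m_closed)
  moreover have "pr x \<oplus>\<^bsub>M\<^esub> pr y \<in> B" using b sub_props[OF B_sub] by blast
  moreover have "c \<oplus>\<^bsub>M\<^esub> c' \<in> C" using c c' sub_props[OF Csub] by blast
  ultimately show ?thesis using pr_eq by blast
qed

lemma pr_smult: assumes a: "a \<in> carrier D" and x: "x \<in> carrier M"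
  shows "pr (a \<odot>\<^bsub>M\<^esub> x) = a \<odot>\<^bsub>M\<^esub> pr x"
proof -
  obtain c where c: "c \<in> C" "x = pr x \<oplus>\<^bsub>M\<^esub> c" using pr_spec[OF x] by blast
  have b: "pr x \<in> B" using pr_inB x by auto
  have bc: "pr x \<in> carrier M" using b B_carrier by auto
  have cc: "c \<in> carrier M" using c C_carrier by auto
  have "a \<odot>\<^bsub>M\<^esub> x = a \<odot>\<^bsub>M\<^esub> pr x \<oplus>\<^bsub>M\<^esub> a \<odot>\<^bsub>M\<^esub> c"
    using c(2) bc cc a by (metis smult_r_distr)
  moreover have "a \<odot>\<^bsub>M\<^esub> pr x \<in> B" using a b sub_props[OF B_sub] by blast
  moreover have "a \<odot>\<^bsub>M\<^esub> c \<in> C" using a c sub_props[OF Csub] by blast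
  ultimately show ?thesis using pr_eq by blast
qed

lemma pr_carrier: "x \<in> carrier M \<Longrightarrow> pr x \<in> carrier M"
  using pr_inB B_carrier by blast


lemma exists_d: "\<exists>d\<in>carrier D. \<forall>y\<in>carrier M. d \<odot>\<^bsub>M\<^esub> ([card (carrier G)] \<cdot>\<^bsub>M\<^esub> y) = y"
proof -
  have "card (carrier G) > 0" using finG Gp.one_closed card_gt_0_iff by blast
  then have nP: "[card (carrier G)] \<cdot>\<^bsub>D\<^esub> \<one>\<^bsub>D\<^esub> \<notin> P" by (rule m_notin_P)
  have mc: "[card (carrier G)] \<cdot>\<^bsub>D\<^esub> \<one>\<^bsub>D\<^esub> \<in> carrier D" by simp
  obtain d where d: "d \<in> carrier D" "\<forall>y\<in>carrier M. d \<odot>\<^bsub>M\<^esub> (([card (carrier G)] \<cdot>\<^bsub>D\<^esub> \<one>\<^bsub>D\<^esub>) \<odot>\<^bsub>M\<^esub> y) = y"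
    using unit_act[OF mc nP] by blast
  then show ?thesis using smult_add_pow by auto
qed

definition "d0 = (SOME d. d \<in> carrier D \<and> (\<forall>y\<in>carrier M. d \<odot>\<^bsub>M\<^esub> ([card (carrier G)] \<cdot>\<^bsub>M\<^esub> y) = y))"

lemma d0: "d0 \<in> carrier D" "\<And>y. y \<in> carrier M \<Longrightarrow> d0 \<odot>\<^bsub>M\<^esub> ([card (carrier G)] \<cdot>\<^bsub>M\<^esub> y) = y"
  using someI_ex[OF exists_d[unfolded Bex_def]] unfolding d0_def by blast+

definition "trm x g = \<phi> g (pr (\<phi> (inv\<^bsub>G\<^esub> g) x))"
definition "avg x = d0 \<odot>\<^bsub>M\<^esub> finsum M (trm x) (carrier G)"

lemma trmB: "x \<in> carrier M \<Longrightarrow> g \<in> carrier G \<Longrightarrow> trm x g \<in> B"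
  unfolding trm_def using B_act pr_inB by simp

lemma trmcarrier: "x \<in> carrier M \<Longrightarrow> trm x \<in> carrier G \<rightarrow> carrier M"
  using trmB B_carrier by blast

lemma avg_B: "x \<in> carrier M \<Longrightarrow> avg x \<in> B"
  unfolding avg_def using sub_finsum[OF B_sub finG] trmB sub_props(4)[OF B_sub] d0(1) by blast

lemma avg_carrier: "x \<in> carrier M \<Longrightarrow> avg x \<in> carrier M"
  using avg_B B_carrier by blast

lemma avg_fix: assumes b: "b \<in> B" shows "avg b = b"
proof -
  have bc: "b \<in> carrier M" using b B_carrier by blast
  have "finsum M (trm b) (carrier G) = finsum M (\<lambda>_. b) (carrier G)"
  proof (rule M.finsum_cong')
    fix g assume g: "g \<in> carrier G"
    have "\<phi> (inv\<^bsub>G\<^esub> g) b \<in> B" using b g B_act by simp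
    then show "trm b g = b" unfolding trm_def using pr_B g bc by simp
  qed (use bc in auto)
  also have "\<dots> = [card (carrier G)] \<cdot>\<^bsub>M\<^esub> b" using finsum_const_M[OF bc] .
  finally show ?thesis unfolding avg_def using d0(2)[OF bc] by simp
qed

lemma avg_add: assumes x: "x \<in> carrier M" and y: "y \<in> carrier M"
  shows "avg (x \<oplus>\<^bsub>M\<^esub> y) = avg x \<oplus>\<^bsub>M\<^esub> avg y"
proof -
  have "finsum M (trm (x \<oplus>\<^bsub>M\<^esub> y)) (carrier G) = finsum M (\<lambda>g. trm x g \<oplus>\<^bsub>M\<^esub> trm y g) (carrier G)"
  proof (rule M.finsum_cong')
    fix g assume g: "g \<in> carrier G"
    show "trm (x \<oplus>\<^bsub>M\<^esub> y) g = trm x g \<oplus>\<^bsub>M\<^esub> trm y g"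
      unfolding trm_def using g x y by (simp add: act_add pr_add pr_carrier)
  qed (use trmcarrier[OF x] trmcarrier[OF y] in auto)
  also have "\<dots> = finsum M (trm x) (carrier G) \<oplus>\<^bsub>M\<^esub> finsum M (trm y) (carrier G)"
    using trmcarrier[OF x] trmcarrier[OF y] by (rule M.finsum_addf)
  finally show ?thesis unfolding avg_def using d0(1) trmcarrier[OF x] trmcarrier[OF y]
    by (simp add: smult_r_distr)
qed

lemma avg_smult: assumes a: "a \<in> carrier D" and x: "x \<in> carrier M"
  shows "avg (a \<odot>\<^bsub>M\<^esub> x) = a \<odot>\<^bsub>M\<^esub> avg x"
proof -
  have "finsum M (trm (a \<odot>\<^bsub>M\<^esub> x)) (carrier G) = finsum M (\<lambda>g. a \<odot>\<^bsub>M\<^esub> trm x g) (carrier G)"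
  proof (rule M.finsum_cong')
    fix g assume g: "g \<in> carrier G"
    show "trm (a \<odot>\<^bsub>M\<^esub> x) g = a \<odot>\<^bsub>M\<^esub> trm x g"
      unfolding trm_def using g x a by (simp add: act_smult pr_smult pr_carrier)
  qed (use trmcarrier[OF x] a in auto)
  also have "\<dots> = a \<odot>\<^bsub>M\<^esub> finsum M (trm x) (carrier G)"
    using finsum_smult_ldistr[OF finG a trmcarrier[OF x]] by simp
  finally have e: "finsum M (trm (a \<odot>\<^bsub>M\<^esub> x)) (carrier G) = a \<odot>\<^bsub>M\<^esub> finsum M (trm x) (carrier G)" .
  have sc: "finsum M (trm x) (carrier G) \<in> carrier M" using trmcarrier[OF x] by simp
  show ?thesis unfolding avg_def e using sc a d0(1)
    by (metis R.m_comm smult_assoc1)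
qed

lemma avg_act: assumes h: "h \<in> carrier G" and x: "x \<in> carrier M"
  shows "avg (\<phi> h x) = \<phi> h (avg x)"
proof -
  have hx: "\<phi> h x \<in> carrier M" using h x by simp
  have img: "(\<lambda>k. h \<otimes>\<^bsub>G\<^esub> k) ` carrier G = carrier G" using Gp.surj_const_mult[OF h] .
  have "finsum M (trm (\<phi> h x)) (carrier G) = finsum M (trm (\<phi> h x)) ((\<lambda>k. h \<otimes>\<^bsub>G\<^esub> k) ` carrier G)"
    using img by simp
  also have "\<dots> = finsum M (\<lambda>k. trm (\<phi> h x) (h \<otimes>\<^bsub>G\<^esub> k)) (carrier G)"
    using M.add.finprod_reindex[of "trm (\<phi> h x)" "\<lambda>k. h \<otimes>\<^bsub>G\<^esub> k" "carrier G"]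
      trmcarrier[OF hx] img Gp.inj_on_cmult[OF h] by simp
  also have "\<dots> = finsum M (\<lambda>k. \<phi> h (trm x k)) (carrier G)"
  proof (rule M.finsum_cong')
    fix k assume k: "k \<in> carrier G"
    have ik: "inv\<^bsub>G\<^esub> (h \<otimes>\<^bsub>G\<^esub> k) = inv\<^bsub>G\<^esub> k \<otimes>\<^bsub>G\<^esub> inv\<^bsub>G\<^esub> h"
      using h k by (simp add: Gp.inv_mult_group)
    have "\<phi> (inv\<^bsub>G\<^esub> (h \<otimes>\<^bsub>G\<^esub> k)) (\<phi> h x) = \<phi> (inv\<^bsub>G\<^esub> k) x"
      unfolding ik using h k x by (simp add: act_mult)
    then show "trm (\<phi> h x) (h \<otimes>\<^bsub>G\<^esub> k) = \<phi> h (trm x k)"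
      unfolding trm_def using h k x by (simp add: act_mult pr_carrier)
  qed (use trmcarrier[OF x] h in \<open>auto simp: Pi_def\<close>)
  also have "\<dots> = \<phi> h (finsum M (trm x) (carrier G))"
    using act_finsum[OF finG trmcarrier[OF x] h] by simp
  finally have e: "finsum M (trm (\<phi> h x)) (carrier G) = \<phi> h (finsum M (trm x) (carrier G))" .
  have sc: "finsum M (trm x) (carrier G) \<in> carrier M" using trmcarrier[OF x] by simp
  show ?thesis unfolding avg_def e using act_smult[OF h d0(1) sc] by simp
qed

lemma avg_hom: "is_hom avg"
  unfolding is_hom_def using avg_carrier avg_add avg_smult avg_act by blast

lemma final: "\<exists>K. DG_submodule D G M \<phi> K \<and> B \<inter> K = {\<zero>\<^bsub>M\<^esub>} \<and>
             carrier M = {b \<oplus>\<^bsub>M\<^esub> k | b k. b \<in> B \<and> k \<in> K}"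
proof -
  define K where "K = {x \<in> carrier M. avg x = \<zero>\<^bsub>M\<^esub>}"
  have K: "DG_submodule D G M \<phi> K" unfolding K_def by (rule hom_kernel[OF avg_hom])
  have Ksub: "K \<subseteq> carrier M" unfolding K_def by blast
  have int: "B \<inter> K = {\<zero>\<^bsub>M\<^esub>}"
  proof
    show "B \<inter> K \<subseteq> {\<zero>\<^bsub>M\<^esub>}" unfolding K_def using avg_fix by auto
    have "\<zero>\<^bsub>M\<^esub> \<in> K" unfolding K_def using hom_zero[OF avg_hom] by simp
    then show "{\<zero>\<^bsub>M\<^esub>} \<subseteq> B \<inter> K" using sub_props(2)[OF B_sub] by blast
  qed
  have cov: "carrier M = {b \<oplus>\<^bsub>M\<^esub> k | b k. b \<in> B \<and> k \<in> K}"
  proof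
    show "{b \<oplus>\<^bsub>M\<^esub> k | b k. b \<in> B \<and> k \<in> K} \<subseteq> carrier M"
      using Ksub B_carrier by auto
    show "carrier M \<subseteq> {b \<oplus>\<^bsub>M\<^esub> k | b k. b \<in> B \<and> k \<in> K}"
    proof
      fix x assume x: "x \<in> carrier M"
      have ac: "avg x \<in> carrier M" using avg_carrier[OF x] .
      define k where "k = x \<oplus>\<^bsub>M\<^esub> \<ominus>\<^bsub>M\<^esub> avg x"
      have kc: "k \<in> carrier M" unfolding k_def using x ac by simp
      have "avg k = avg x \<oplus>\<^bsub>M\<^esub> \<ominus>\<^bsub>M\<^esub> avg (avg x)"
        unfolding k_def using avg_add[OF x] hom_neg[OF avg_hom ac] x ac by simp
      also have "\<dots> = \<zero>\<^bsub>M\<^esub>" using avg_fix[OF avg_B[OF x]] ac by (simp add: M.r_neg)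
      finally have "k \<in> K" unfolding K_def using kc by blast
      moreover have "x = avg x \<oplus>\<^bsub>M\<^esub> k"
      proof -
        have "x \<oplus>\<^bsub>M\<^esub> \<ominus>\<^bsub>M\<^esub> avg x = \<ominus>\<^bsub>M\<^esub> avg x \<oplus>\<^bsub>M\<^esub> x"
          using x ac by (simp add: M.a_comm)
        then show ?thesis unfolding k_def using x ac by (simp add: M.r_neg2)
      qed
      ultimately show "x \<in> {b \<oplus>\<^bsub>M\<^esub> k | b k. b \<in> B \<and> k \<in> K}" using avg_B[OF x] by blast
    qed
  qed
  show ?thesis using K int cov by blast
qed

end

context L7
begin

lemma main: "\<exists>K. DG_submodule D G M \<phi> K \<and> B \<inter> K = {\<zero>\<^bsub>M\<^esub>} \<and>
             carrier M = {b \<oplus>\<^bsub>M\<^esub> k | b k. b \<in> B \<and> k \<in> K}"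
proof -
  obtain C where C: "submodule C D M" "B \<inter> C = {\<zero>\<^bsub>M\<^esub>}" "carrier M \<subseteq> msum B C"
    using exists_C by blast
  have "L7C D G M \<phi> B L Bf P C"
    unfolding L7C_def L7C_axioms_def using L7_axioms C by blast
  then show ?thesis by (rule L7C.final)
qed

end

theorem lemma7:
  fixes D :: "('d, 'e) ring_scheme" and G :: "('g, 'h) monoid_scheme"
    and M :: "('d, 'm) module" and \<phi> :: "'g \<Rightarrow> 'm \<Rightarrow> 'm"
    and B :: "'m set" and L :: "'l set" and Bf :: "'l \<Rightarrow> 'm set" and P :: "'d set"
  assumes "finite (carrier G)"
    and "dedekind_domain D"
    and "DG_module D G M \<phi>"
    and "DG_submodule D G M \<phi> B"
    and "internal_direct_sum M L Bf B"
    and "\<forall>l \<in> L. simple_DG_submodule D G M \<phi> (Bf l)"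
    and "simple_DG_quotient D G M \<phi> B"
    and "\<forall>l \<in> L. \<not> quotient_DG_iso D G M \<phi> B (Bf l)"
    and "ann D M B = P" and "ann_quot D M B = P"
    and "maximalideal P D"
    and "char_zero_ring (D Quot P)"
  shows "\<exists>K. DG_submodule D G M \<phi> K \<and> B \<inter> K = {\<zero>\<^bsub>M\<^esub>} \<and>
             carrier M = {b \<oplus>\<^bsub>M\<^esub> k | b k. b \<in> B \<and> k \<in> K}"
proof -
  have "L7 D G M \<phi> B L Bf P" unfolding L7_def using assms by blast
  then show ?thesis by (rule L7.main)
qed

end
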